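(* Let $n=n_1+\dots+n_k=p+q$ with positive integers, let $G=U(n)$, let $L=U(n_1)\times\cdots\times U(n_k)$ and $H=U(p)\times U(q)$ be the natural block-diagonal subgroups of $G$, and let $G'=O(n)$. If $\min(p,q)=2$ and $k\ge 4$, then $LG'H\subsetneq G$.
   Context: $LG'H=\{xyz:x\in L,y\in G',z\in H\}$. *)

theory Defs
  imports Complex_Main "Jordan_Normal_Form.Matrix"
begin

definition ctrans :: "complex mat \<Rightarrow> complex mat" where
  "ctrans A = mat (dim_col A) (dim_row A) (\<lambda>(i,j). cnj (A $$ (j,i)))"

definition unitary_group :: "nat \<Rightarrow> complex mat set" where
  "unitary_group n = {A \<in> carrier_mat n n. A * ctrans A = 1\<^sub>m n}"

definition orthogonal_group :: "nat \<Rightarrow> complex mat set" where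
  "orthogonal_group n = {A \<in> unitary_group n. \<forall>i<n. \<forall>j<n. A $$ (i,j) \<in> \<real>}"

definition same_block :: "nat list \<Rightarrow> nat \<Rightarrow> nat \<Rightarrow> bool" where
  "same_block ns i j = (\<exists>m<length ns.
      sum_list (take m ns) \<le> i \<and> i < sum_list (take (Suc m) ns) \<and>
      sum_list (take m ns) \<le> j \<and> j < sum_list (take (Suc m) ns))"

definition block_unitary_group :: "nat list \<Rightarrow> complex mat set" where
  "block_unitary_group ns = {A \<in> unitary_group (sum_list ns).
      \<forall>i<sum_list ns. \<forall>j<sum_list ns. \<not> same_block ns i j \<longrightarrow> A $$ (i,j) = 0}"

definition triple_prod :: "complex mat set \<Rightarrow> complex mat set \<Rightarrow> complex mat set \<Rightarrow> complex mat set" where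
  "triple_prod X Y Z = {x * y * z | x y z. x \<in> X \<and> y \<in> Y \<and> z \<in> Z}"

end

theory Submission
  imports Defs "Jordan_Normal_Form.Determinant"
begin

definition m2 :: "(bool \<Rightarrow> bool \<Rightarrow> complex) \<Rightarrow> (bool \<Rightarrow> bool \<Rightarrow> complex) \<Rightarrow> bool \<Rightarrow> bool \<Rightarrow> complex" where
  "m2 X Y = (\<lambda>s t. X s False * Y False t + X s True * Y True t)"
definition adj2 :: "(bool \<Rightarrow> bool \<Rightarrow> complex) \<Rightarrow> bool \<Rightarrow> bool \<Rightarrow> complex" where
  "adj2 A = (\<lambda>s t. cnj (A t s))"
definition id2 :: "bool \<Rightarrow> bool \<Rightarrow> complex" where
  "id2 = (\<lambda>s t. if s = t then 1 else 0)"
definition tr2 :: "(bool \<Rightarrow> bool \<Rightarrow> complex) \<Rightarrow> complex" where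
  "tr2 X = X False False + X True True"

lemma m2_assoc: "m2 (m2 X Y) Z = m2 X (m2 Y Z)"
  unfolding m2_def by (auto simp: fun_eq_iff algebra_simps)
lemma m2_id2: "m2 X id2 = X" "m2 id2 X = X"
  unfolding m2_def id2_def by (auto simp: fun_eq_iff)
lemma tr2_comm: "tr2 (m2 X Y) = tr2 (m2 Y X)"
  unfolding m2_def tr2_def by (simp add: algebra_simps)

lemma inv2_aux:
  fixes a b c d e f g k :: complex
  assumes "e*a + f*c = 1" "e*b+f*d = 0" "g*a+k*c = 0" "g*b+k*d=1"
  shows "a*e+b*g = 1" "a*f+b*k = 0" "c*e+d*g = 0" "c*f+d*k = 1"
proof -
  define D where "D = a*d-b*c"
  have "(e*k - f*g)*D = (e*a+f*c)*(g*b+k*d) - (e*b+f*d)*(g*a+k*c)"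
    unfolding D_def by (simp add: algebra_simps)
  then have D: "D \<noteq> 0" using assms by auto
  have eD: "e*D = d"
  proof -
    have "e*D = (e*a+f*c)*d - (e*b+f*d)*c" unfolding D_def by (simp add: algebra_simps)
    then show ?thesis using assms by simp
  qed
  have fD: "f*D = -b"
  proof -
    have "f*D = (e*b+f*d)*a - (e*a+f*c)*b" unfolding D_def by (simp add: algebra_simps)
    then show ?thesis using assms by simp
  qed
  have gD: "g*D = -c"
  proof -
    have "g*D = (g*a+k*c)*d - (g*b+k*d)*c" unfolding D_def by (simp add: algebra_simps)
    then show ?thesis using assms by simp
  qed
  have kD: "k*D = a"
  proof -
    have "k*D = (g*b+k*d)*a - (g*a+k*c)*b" unfolding D_def by (simp add: algebra_simps)
    then show ?thesis using assms by simp
  qed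
  have "(a*e+b*g)*D = a*(e*D) + b*(g*D)" by (simp add: algebra_simps)
  also have "\<dots> = a*d + b*(-c)" by (simp only: eD gD)
  also have "\<dots> = 1*D" by (simp add: D_def)
  finally show "a*e+b*g = 1" using D by simp
  have "(a*f+b*k)*D = a*(f*D) + b*(k*D)" by (simp add: algebra_simps)
  also have "\<dots> = 0*D" unfolding fD kD by simp
  finally show "a*f+b*k = 0" using D by simp
  have "(c*e+d*g)*D = c*(e*D) + d*(g*D)" by (simp add: algebra_simps)
  also have "\<dots> = 0*D" unfolding eD gD by simp
  finally show "c*e+d*g = 0" using D by simp
  have "(c*f+d*k)*D = c*(f*D) + d*(k*D)" by (simp add: algebra_simps)
  also have "\<dots> = c*(-b) + d*a" by (simp only: fD kD)
  also have "\<dots> = 1*D" by (simp add: D_def algebra_simps)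
  finally show "c*f+d*k = 1" using D by simp
qed

lemma inv2: assumes "m2 B A = id2" shows "m2 A B = id2"
proof -
  have e: "B s False * A False t + B s True * A True t = (if s = t then 1 else 0)" for s t
    using fun_cong[OF fun_cong[OF assms, of s], of t] by (simp add: m2_def id2_def)
  note e1 = inv2_aux[OF e[of False False, simplified] e[of False True, simplified]
                         e[of True False, simplified] e[of True True, simplified]]
  show ?thesis unfolding m2_def id2_def fun_eq_iff
  proof (intro allI)
    fix s t
    show "A s False * B False t + A s True * B True t = (if s = t then 1 else 0)"
      using e1 by (cases s; cases t; simp)
  qed
qed

lemma sym_tr: assumes "\<And>s t. R0 s t = R0 t s" "\<And>s t. R1 s t = R1 t s" "\<And>s t. R2 s t = R2 t s"
  shows "tr2 (m2 (m2 R0 R2) R1) = tr2 (m2 (m2 R0 R1) R2)"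
  unfolding m2_def tr2_def using assms[of False True] by (simp add: algebra_simps)

lemma conj_prod:
  assumes "m2 A P = id2"
  shows "m2 (m2 (m2 P X) A) (m2 (m2 P Y) A) = m2 (m2 P (m2 X Y)) A"
proof -
  have "m2 (m2 (m2 P X) A) (m2 (m2 P Y) A) = m2 P (m2 X (m2 (m2 A P) (m2 Y A)))"
    by (simp only: m2_assoc)
  also have "\<dots> = m2 (m2 P (m2 X Y)) A"
    by (simp only: assms m2_id2 m2_assoc)
  finally show ?thesis .
qed

lemma conj_tr:
  assumes "m2 A P = id2"
  shows "tr2 (m2 (m2 P W) A) = tr2 W"
proof -
  have "tr2 (m2 (m2 P W) A) = tr2 (m2 A (m2 P W))" by (rule tr2_comm)
  also have "\<dots> = tr2 (m2 (m2 A P) W)" by (simp only: m2_assoc)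
  also have "\<dots> = tr2 W" by (simp only: assms m2_id2)
  finally show ?thesis .
qed

lemma key2:
  assumes "m2 A (adj2 A) = id2"
    and "\<And>s t. R0 s t = R0 t s" "\<And>s t. R1 s t = R1 t s" "\<And>s t. R2 s t = R2 t s"
  shows "tr2 (m2 (m2 (m2 (m2 (adj2 A) R0) A) (m2 (m2 (adj2 A) R1) A)) (m2 (m2 (adj2 A) R2) A))
       = tr2 (m2 (m2 (m2 (m2 (adj2 A) R0) A) (m2 (m2 (adj2 A) R2) A)) (m2 (m2 (adj2 A) R1) A))"
proof -
  have c: "tr2 (m2 (m2 (m2 (m2 (adj2 A) X) A) (m2 (m2 (adj2 A) Y) A)) (m2 (m2 (adj2 A) Z) A))
     = tr2 (m2 (m2 X Y) Z)" for X Y Z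
    by (simp only: conj_prod[OF assms(1)] conj_tr[OF assms(1)])
  show ?thesis unfolding c using sym_tr[OF assms(2-4)] by simp
qed

lemma ctrans_carrier[simp]: "A \<in> carrier_mat n m \<Longrightarrow> ctrans A \<in> carrier_mat m n"
  unfolding ctrans_def by auto

lemma ctrans_index[simp]: "i < dim_col A \<Longrightarrow> j < dim_row A \<Longrightarrow> ctrans A $$ (i,j) = cnj (A $$ (j,i))"
  unfolding ctrans_def by auto

lemma ctrans_dims[simp]: "dim_row (ctrans A) = dim_col A" "dim_col (ctrans A) = dim_row A"
  unfolding ctrans_def by auto

lemma ctrans_mult:
  assumes "A \<in> carrier_mat n m" "B \<in> carrier_mat m k"
  shows "ctrans (A * B) = ctrans B * ctrans A"
  using assms
  by (intro eq_matI) (auto simp: scalar_prod_def cnj_sum mult.commute intro!: sum.cong)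

lemma unitary_mult:
  assumes "X \<in> unitary_group n" "Y \<in> unitary_group n"
  shows "X * Y \<in> unitary_group n"
proof -
  have X: "X \<in> carrier_mat n n" "X * ctrans X = 1\<^sub>m n" and Y: "Y \<in> carrier_mat n n" "Y * ctrans Y = 1\<^sub>m n"
    using assms unfolding unitary_group_def by auto
  have c: "ctrans X \<in> carrier_mat n n" "ctrans Y \<in> carrier_mat n n" using X Y by auto
  have "X * Y * ctrans (X * Y) = X * Y * (ctrans Y * ctrans X)"
    by (simp add: ctrans_mult[OF X(1) Y(1)])
  also have "\<dots> = X * (Y * (ctrans Y * ctrans X))"
    using assoc_mult_mat[OF X(1) Y(1) mult_carrier_mat[OF c(2) c(1)]] .
  also have "Y * (ctrans Y * ctrans X) = Y * ctrans Y * ctrans X"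
    using assoc_mult_mat[OF Y(1) c(2) c(1)] by simp
  also have "\<dots> = ctrans X" by (simp add: Y(2) left_mult_one_mat[OF c(1)])
  also have "X * ctrans X = 1\<^sub>m n" by (rule X(2))
  finally show ?thesis using X Y unfolding unitary_group_def by auto
qed

lemma unitary_cols:
  assumes "X \<in> unitary_group n" "a < n" "b < n"
  shows "(\<Sum>r<n. cnj (X $$ (r,a)) * X $$ (r,b)) = (if a = b then 1 else 0)"
proof -
  have X: "X \<in> carrier_mat n n" "X * ctrans X = 1\<^sub>m n"
    using assms unfolding unitary_group_def by auto
  have "ctrans X * X = 1\<^sub>m n"
    by (rule mat_mult_left_right_inverse[OF X(1) _ X(2)]) (use X in simp)
  then have "(ctrans X * X) $$ (a,b) = (if a = b then 1 else 0)" using assms by simp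
  then show ?thesis using X assms by (simp add: scalar_prod_def lessThan_atLeast0)
qed

lemma unitary_of_rows:
  assumes "X \<in> carrier_mat n n"
    and "\<And>r r'. r < n \<Longrightarrow> r' < n \<Longrightarrow> (\<Sum>c<n. X $$ (r,c) * cnj (X $$ (r',c))) = (if r = r' then 1 else 0)"
  shows "X \<in> unitary_group n"
  unfolding unitary_group_def
  using assms by (auto intro!: eq_matI simp: scalar_prod_def lessThan_atLeast0)

definition sw :: "nat \<Rightarrow> nat \<Rightarrow> nat \<Rightarrow> nat" where
  "sw a b x = (if x = a then b else if x = b then a else x)"

lemma sw_sw[simp]: "sw a b (sw a b x) = x" unfolding sw_def by auto

lemma sw_bij: "a < n \<Longrightarrow> b < n \<Longrightarrow> bij_betw (sw a b) {..<n} {..<n}"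
  by (rule bij_betwI[where g = "sw a b"]) (auto simp: sw_def)

lemma perm_unitary:
  fixes W :: "nat \<Rightarrow> nat \<Rightarrow> complex"
  assumes W: "\<And>x x'. x < n \<Longrightarrow> x' < n \<Longrightarrow> (\<Sum>y<n. W x y * cnj (W x' y)) = (if x = x' then 1 else 0)"
    and al: "bij_betw \<alpha> {..<n} {..<n}" and be: "bij_betw \<beta> {..<n} {..<n}"
  shows "mat n n (\<lambda>(r,c). W (\<alpha> r) (\<beta> c)) \<in> unitary_group n"
proof (rule unitary_of_rows)
  fix r r' assume r: "r < n" "r' < n"
  have "(\<Sum>c<n. mat n n (\<lambda>(r,c). W (\<alpha> r) (\<beta> c)) $$ (r,c) * cnj (mat n n (\<lambda>(r,c). W (\<alpha> r) (\<beta> c)) $$ (r',c)))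
      = (\<Sum>c<n. W (\<alpha> r) (\<beta> c) * cnj (W (\<alpha> r') (\<beta> c)))"
    using r by (intro sum.cong) auto
  also have "\<dots> = (\<Sum>y<n. W (\<alpha> r) y * cnj (W (\<alpha> r') y))"
    using sum.reindex_bij_betw[OF be, of "\<lambda>y. W (\<alpha> r) y * cnj (W (\<alpha> r') y)"] by simp
  also have "\<dots> = (if \<alpha> r = \<alpha> r' then 1 else 0)"
  proof -
    have "\<alpha> r < n" "\<alpha> r' < n" using al r by (auto simp: bij_betw_def)
    then show ?thesis using W by simp
  qed
  also have "\<dots> = (if r = r' then 1 else 0)"
    using al r by (auto simp: bij_betw_def inj_on_def)
  finally show "(\<Sum>c<n. mat n n (\<lambda>(r,c). W (\<alpha> r) (\<beta> c)) $$ (r,c) * cnj (mat n n (\<lambda>(r,c). W (\<alpha> r) (\<beta> c)) $$ (r',c)))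
      = (if r = r' then 1 else 0)" .
qed auto

definition U4l :: "complex list list" where
  "U4l = [[1, 0, -(1+\<i>), 1], [1, 1, \<i>, \<i>], [1, \<i>, 1, -\<i>], [-1, 1+\<i>, 0, 1]]"

definition U4 :: "nat \<Rightarrow> nat \<Rightarrow> complex" where
  "U4 x y = U4l ! x ! y / 2"

lemma sum4: "(\<Sum>y<(4::nat). f y) = f 0 + f 1 + f 2 + (f 3::complex)"
  by (simp add: eval_nat_numeral)

lemma four_cases: "x < (4::nat) \<Longrightarrow> x = 0 \<or> x = 1 \<or> x = 2 \<or> x = 3" by auto

lemma U4_rows: "x < 4 \<Longrightarrow> x' < 4 \<Longrightarrow> (\<Sum>y<4. U4 x y * cnj (U4 x' y)) = (if x = x' then 1 else 0)"
  unfolding sum4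
  apply (drule four_cases)+
  apply (elim disjE)
  by (simp_all add: U4_def U4l_def field_simps complex_eq_iff)

definition Wm :: "nat \<Rightarrow> nat \<Rightarrow> complex" where
  "Wm x y = (if x < 4 \<and> y < 4 then U4 x y else if x = y then 1 else 0)"

lemma Wm_rows:
  assumes "4 \<le> n" "x < n" "x' < n"
  shows "(\<Sum>y<n. Wm x y * cnj (Wm x' y)) = (if x = x' then 1 else 0)"
proof (cases "x < 4 \<and> x' < 4")
  case True
  have "(\<Sum>y<n. Wm x y * cnj (Wm x' y)) = (\<Sum>y<4. Wm x y * cnj (Wm x' y))"
    using assms True by (intro sum.mono_neutral_right) (auto simp: Wm_def)
  also have "\<dots> = (\<Sum>y<4. U4 x y * cnj (U4 x' y))"
    using True by (intro sum.cong) (auto simp: Wm_def)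
  finally show ?thesis using U4_rows True by simp
next
  case False
  then consider "4 \<le> x" | "4 \<le> x'" by linarith
  then show ?thesis
  proof cases
    case 1
    have "(\<Sum>y<n. Wm x y * cnj (Wm x' y)) = (\<Sum>y<n. if y = x then cnj (Wm x' x) else 0)"
      using 1 by (intro sum.cong) (auto simp: Wm_def)
    also have "\<dots> = cnj (Wm x' x)" using assms by simp
    finally show ?thesis using 1 by (auto simp: Wm_def)
  next
    case 2
    have "(\<Sum>y<n. Wm x y * cnj (Wm x' y)) = (\<Sum>y<n. if y = x' then Wm x x' else 0)"
      using 2 by (intro sum.cong) (auto simp: Wm_def)
    also have "\<dots> = Wm x x'" using assms by simp
    finally show ?thesis using 2 by (auto simp: Wm_def)
  qed
qed

definition ix :: "bool \<Rightarrow> nat" where "ix s = (if s then 1 else 0)"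

definition GMf :: "nat \<Rightarrow> complex mat \<Rightarrow> nat set \<Rightarrow> bool \<Rightarrow> bool \<Rightarrow> complex" where
  "GMf j0 X B = (\<lambda>s t. \<Sum>r\<in>B. cnj (X $$ (r, j0 + ix s)) * X $$ (r, j0 + ix t))"

definition Af :: "nat \<Rightarrow> complex mat \<Rightarrow> bool \<Rightarrow> bool \<Rightarrow> complex" where
  "Af j0 h = (\<lambda>s t. h $$ (j0 + ix s, j0 + ix t))"

definition bs :: "nat list \<Rightarrow> nat \<Rightarrow> nat" where "bs ns m = sum_list (take m ns)"

lemma bs_mono: "m \<le> m' \<Longrightarrow> bs ns m \<le> bs ns m'"
proof -
  assume "m \<le> m'"
  then obtain d where "m' = m + d" using le_Suc_ex by blast
  then show ?thesis unfolding bs_def by (simp add: take_add)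
qed

lemma bs_Suc: "m < length ns \<Longrightarrow> bs ns (Suc m) = bs ns m + ns ! m"
  unfolding bs_def by (simp add: take_Suc_conv_app_nth)

lemma bs_len: "bs ns (length ns) = sum_list ns"
  unfolding bs_def by simp

lemma block_unique:
  assumes "bs ns m \<le> i" "i < bs ns (Suc m)" "bs ns m' \<le> i" "i < bs ns (Suc m')"
  shows "m = m'"
proof (rule ccontr)
  assume "m \<noteq> m'"
  then consider "Suc m \<le> m'" | "Suc m' \<le> m" by linarith
  then show False
  proof cases
    case 1 then show False using bs_mono[OF 1, of ns] assms by linarith
  next
    case 2 then show False using bs_mono[OF 2, of ns] assms by linarith
  qed
qed

lemma same_block_alt: "same_block ns i j \<longleftrightarrow> (\<exists>m<length ns. bs ns m \<le> i \<and> i < bs ns (Suc m) \<and> bs ns m \<le> j \<and> j < bs ns (Suc m))"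
  unfolding same_block_def bs_def by simp

lemma same_block_pq: "same_block [p,q] c a \<longleftrightarrow> (c < p \<and> a < p) \<or> (p \<le> c \<and> c < p+q \<and> p \<le> a \<and> a < p+q)"
proof
  assume "same_block [p,q] c a"
  then obtain m where "m < length [p,q]" "sum_list (take m [p,q]) \<le> c" "c < sum_list (take (Suc m) [p,q])"
    "sum_list (take m [p,q]) \<le> a" "a < sum_list (take (Suc m) [p,q])"
    unfolding same_block_def by blast
  then show "(c < p \<and> a < p) \<or> (p \<le> c \<and> c < p+q \<and> p \<le> a \<and> a < p+q)"
    by (cases m) (auto simp: less_Suc_eq)
next
  assume "(c < p \<and> a < p) \<or> (p \<le> c \<and> c < p+q \<and> p \<le> a \<and> a < p+q)"
  then show "same_block [p,q] c a"
  proof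
    assume "c < p \<and> a < p"
    then show ?thesis unfolding same_block_def by (intro exI[of _ 0]) auto
  next
    assume "p \<le> c \<and> c < p+q \<and> p \<le> a \<and> a < p+q"
    then show ?thesis unfolding same_block_def by (intro exI[of _ 1]) auto
  qed
qed

lemma gram_left:
  fixes l X :: "complex mat"
  assumes l: "l \<in> block_unitary_group ns" and X: "X \<in> carrier_mat N N" and N: "sum_list ns = N"
    and B: "B \<subseteq> {..<N}" and cl: "\<And>r t. r \<in> B \<Longrightarrow> t < N \<Longrightarrow> same_block ns r t \<Longrightarrow> t \<in> B"
    and a: "a < N" and b: "b < N"
  shows "(\<Sum>r\<in>B. cnj ((l*X)$$(r,a)) * (l*X)$$(r,b)) = (\<Sum>r\<in>B. cnj (X$$(r,a)) * X$$(r,b))"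
proof -
  have lU: "l \<in> unitary_group N" and lz: "\<And>i j. i<N \<Longrightarrow> j<N \<Longrightarrow> \<not> same_block ns i j \<Longrightarrow> l$$(i,j) = 0"
    using l N unfolding block_unitary_group_def by auto
  then have lc: "l \<in> carrier_mat N N" unfolding unitary_group_def by auto
  have sym: "\<And>i j. same_block ns i j \<Longrightarrow> same_block ns j i" unfolding same_block_def by blast
  have fin: "finite B" using B finite_subset by blast
  have lX: "(l*X)$$(r,c) = (\<Sum>t\<in>B. l$$(r,t) * X$$(t,c))" if r: "r \<in> B" and c: "c < N" for r c
  proof -
    have rN: "r < N" using r B by auto
    have "(l*X)$$(r,c) = (\<Sum>t<N. l$$(r,t) * X$$(t,c))"
      using lc X rN c by (simp add: scalar_prod_def lessThan_atLeast0)
    also have "\<dots> = (\<Sum>t\<in>B. l$$(r,t) * X$$(t,c))"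
    proof (rule sum.mono_neutral_right)
      show "\<forall>t\<in>{..<N} - B. l $$ (r, t) * X $$ (t, c) = 0"
        using lz rN cl[OF r] by auto
    qed (use B in auto)
    finally show ?thesis .
  qed
  have ll: "(\<Sum>r\<in>B. cnj (l$$(r,t)) * l$$(r,t')) = (if t = t' then 1 else 0)" if t: "t \<in> B" "t' \<in> B" for t t'
  proof -
    have "(\<Sum>r\<in>B. cnj (l$$(r,t)) * l$$(r,t')) = (\<Sum>r<N. cnj (l$$(r,t)) * l$$(r,t'))"
    proof (rule sum.mono_neutral_left)
      show "\<forall>r\<in>{..<N} - B. cnj (l $$ (r, t)) * l $$ (r, t') = 0"
        using lz t B cl sym by (metis DiffE lessThan_iff map_fun_def mult_eq_0_iff complex_cnj_zero subsetD)
    qed (use B in auto)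
    also have "\<dots> = (if t = t' then 1 else 0)"
    proof -
      have "t < N" "t' < N" using t B by auto
      then show ?thesis using unitary_cols[OF lU] by simp
    qed
    finally show ?thesis .
  qed
  let ?F = "\<lambda>r t t'. (cnj (l$$(r,t)) * l$$(r,t')) * (cnj (X$$(t,a)) * X$$(t',b))"
  have "(\<Sum>r\<in>B. cnj ((l*X)$$(r,a)) * (l*X)$$(r,b)) = (\<Sum>r\<in>B. \<Sum>t\<in>B. \<Sum>t'\<in>B. ?F r t t')"
  proof (rule sum.cong[OF refl])
    fix r assume r: "r \<in> B"
    show "cnj ((l*X)$$(r,a)) * (l*X)$$(r,b) = (\<Sum>t\<in>B. \<Sum>t'\<in>B. ?F r t t')"
    proof -
      have "cnj ((l*X)$$(r,a)) * (l*X)$$(r,b) = (\<Sum>t\<in>B. \<Sum>t'\<in>B. cnj (l$$(r,t) * X$$(t,a)) * (l$$(r,t') * X$$(t',b)))"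
        by (simp only: lX[OF r a] lX[OF r b] cnj_sum sum_product)
      then show ?thesis by (simp add: algebra_simps)
    qed
  qed
  also have "\<dots> = (\<Sum>t\<in>B. \<Sum>r\<in>B. \<Sum>t'\<in>B. ?F r t t')" by (rule sum.swap)
  also have "\<dots> = (\<Sum>t\<in>B. \<Sum>t'\<in>B. \<Sum>r\<in>B. ?F r t t')" by (rule sum.cong[OF refl], rule sum.swap)
  also have "\<dots> = (\<Sum>t\<in>B. \<Sum>t'\<in>B. (\<Sum>r\<in>B. cnj (l$$(r,t)) * l$$(r,t')) * (cnj (X$$(t,a)) * X$$(t',b)))"
    by (simp add: sum_distrib_right)
  also have "\<dots> = (\<Sum>t\<in>B. \<Sum>t'\<in>B. (if t = t' then cnj (X$$(t,a)) * X$$(t',b) else 0))"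
    using ll by (intro sum.cong refl) auto
  also have "\<dots> = (\<Sum>t\<in>B. cnj (X$$(t,a)) * X$$(t,b))"
    using fin by simp
  finally show ?thesis .
qed

lemma gram_right:
  fixes h Y :: "complex mat"
  assumes h: "h \<in> block_unitary_group [p,q]" and Y: "Y \<in> carrier_mat (p+q) (p+q)"
    and j: "j0 + 1 < p+q" and cl: "\<And>c s. c < p+q \<Longrightarrow> same_block [p,q] c (j0 + ix s) \<Longrightarrow> c = j0 \<or> c = j0+1"
    and B: "B \<subseteq> {..<p+q}"
  shows "GMf j0 (Y*h) B = m2 (m2 (adj2 (Af j0 h)) (GMf j0 Y B)) (Af j0 h)"
proof -
  let ?N = "p+q"
  have hc: "h \<in> carrier_mat ?N ?N" and hz: "\<And>i j. i<?N \<Longrightarrow> j<?N \<Longrightarrow> \<not> same_block [p,q] i j \<Longrightarrow> h$$(i,j) = 0"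
    using h unfolding block_unitary_group_def unitary_group_def by auto
  have ixl: "j0 + ix s < ?N" for s using j by (simp add: ix_def)
  have col: "(Y*h)$$(r, j0 + ix t) = Y$$(r,j0) * h$$(j0, j0 + ix t) + Y$$(r,j0+1) * h$$(j0+1, j0 + ix t)"
    if r: "r < ?N" for r t
  proof -
    have "(Y*h)$$(r, j0 + ix t) = (\<Sum>c<?N. Y$$(r,c) * h$$(c, j0 + ix t))"
      using hc Y r ixl[of t] by (simp add: scalar_prod_def lessThan_atLeast0)
    also have "\<dots> = (\<Sum>c\<in>{j0, j0+1}. Y$$(r,c) * h$$(c, j0 + ix t))"
    proof (rule sum.mono_neutral_right)
      show "\<forall>c\<in>{..<?N} - {j0, j0+1}. Y$$(r,c) * h$$(c, j0 + ix t) = 0"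
        using hz cl ixl[of t] by auto
    qed (use j in auto)
    also have "\<dots> = Y$$(r,j0) * h$$(j0, j0 + ix t) + Y$$(r,j0+1) * h$$(j0+1, j0 + ix t)"
      by simp
    finally show ?thesis .
  qed
  show ?thesis
  proof (intro ext)
    fix s t
    let ?A = "Af j0 h"
    let ?a = "\<lambda>r. Y$$(r,j0)" and ?b = "\<lambda>r. Y$$(r,j0+1)"
    have "GMf j0 (Y*h) B s t = (\<Sum>r\<in>B.
        cnj (?A False s) * ?A False t * (cnj (?a r) * ?a r) + cnj (?A False s) * ?A True t * (cnj (?a r) * ?b r)
      + cnj (?A True s) * ?A False t * (cnj (?b r) * ?a r) + cnj (?A True s) * ?A True t * (cnj (?b r) * ?b r))"
      unfolding GMf_def
    proof (rule sum.cong[OF refl])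
      fix r assume "r \<in> B"
      then have r: "r < ?N" using B by auto
      show "cnj ((Y*h) $$ (r, j0 + ix s)) * (Y*h) $$ (r, j0 + ix t) = 
        cnj (?A False s) * ?A False t * (cnj (?a r) * ?a r) + cnj (?A False s) * ?A True t * (cnj (?a r) * ?b r)
      + cnj (?A True s) * ?A False t * (cnj (?b r) * ?a r) + cnj (?A True s) * ?A True t * (cnj (?b r) * ?b r)"
        unfolding col[OF r] by (simp add: Af_def ix_def algebra_simps)
    qed
    also have "\<dots> = cnj (?A False s) * ?A False t * (\<Sum>r\<in>B. cnj (?a r) * ?a r) + cnj (?A False s) * ?A True t * (\<Sum>r\<in>B. cnj (?a r) * ?b r)
      + cnj (?A True s) * ?A False t * (\<Sum>r\<in>B. cnj (?b r) * ?a r) + cnj (?A True s) * ?A True t * (\<Sum>r\<in>B. cnj (?b r) * ?b r)"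
      by (simp add: sum.distrib sum_distrib_left)
    also have "\<dots> = m2 (m2 (adj2 ?A) (GMf j0 Y B)) ?A s t"
      by (simp add: m2_def adj2_def GMf_def ix_def algebra_simps)
    finally show "GMf j0 (Y*h) B s t = m2 (m2 (adj2 ?A) (GMf j0 Y B)) ?A s t" .
  qed
qed

lemma num_neq:
  defines "E \<equiv> \<lambda>m s t. cnj (U4 m (ix s)) * U4 m (ix t)"
  shows "tr2 (m2 (m2 (E 0) (E 1)) (E 2)) \<noteq> tr2 (m2 (m2 (E 0) (E 2)) (E 1))"
  unfolding E_def by (simp add: tr2_def m2_def ix_def U4_def U4l_def complex_eq_iff)

theorem proposition6p6:
  fixes ns :: "nat list" and p q :: nat
  assumes "\<forall>m\<in>set ns. m > 0"
    and "p > 0" and "q > 0"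
    and "sum_list ns = p + q"
    and "min p q = 2"
    and "length ns \<ge> 4"
  shows "triple_prod (block_unitary_group ns) (orthogonal_group (p + q)) (block_unitary_group [p, q])
           \<subset> unitary_group (p + q)"
proof -
  define N where "N = p + q"
  have sumN: "sum_list ns = N" using assms(4) N_def by simp
  have pos: "ns ! m > 0" if "m < length ns" for m using assms(1) that by auto
  have bsS: "bs ns m < bs ns (Suc m)" if "m < length ns" for m
    using bs_Suc[OF that] pos[OF that] by simp
  have bsN: "bs ns m \<le> N" if "m \<le> length ns" for m
    using bs_mono[OF that, of ns] bs_len[of ns] sumN by simp
  define b1 where "b1 = bs ns 1"
  define b2 where "b2 = bs ns 2"
  define b3 where "b3 = bs ns 3"
  have "ns \<noteq> []" using assms(6) by auto
  have b0: "bs ns 0 = 0" unfolding bs_def by simp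
  have ord: "0 < b1" "b1 < b2" "b2 < b3" "b3 < N"
    using bsS[of 0] bsS[of 1] bsS[of 2] bsS[of 3] bsN[of 4] assms(6) b0 \<open>ns \<noteq> []\<close>
    unfolding b1_def b2_def b3_def by (simp_all add: numeral_eq_Suc)
  have sub: "triple_prod (block_unitary_group ns) (orthogonal_group N) (block_unitary_group [p, q])
      \<subseteq> unitary_group N"
  proof
    fix g assume "g \<in> triple_prod (block_unitary_group ns) (orthogonal_group N) (block_unitary_group [p, q])"
    then obtain x y z where g: "g = x * y * z" and x: "x \<in> block_unitary_group ns"
      and y: "y \<in> orthogonal_group N" and z: "z \<in> block_unitary_group [p,q]"
      unfolding triple_prod_def by blast
    have "x \<in> unitary_group N" using x sumN unfolding block_unitary_group_def by auto
    moreover have "y \<in> unitary_group N" using y unfolding orthogonal_group_def by auto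
    moreover have "z \<in> unitary_group N" using z N_def unfolding block_unitary_group_def by auto
    ultimately show "g \<in> unitary_group N" using g unitary_mult by blast
  qed
  define j0 where "j0 = (if p = 2 then 0 else p)"
  have q2: "p \<noteq> 2 \<Longrightarrow> q = 2" using assms(5) by (auto simp: min_def split: if_splits)
  have j0N: "j0 + 1 < N" using q2 assms(2,3) unfolding j0_def N_def by auto
  have Jcl: "c = j0 \<or> c = j0+1" if "c < N" "same_block [p,q] c (j0 + ix s)" for c s
    using that q2 unfolding same_block_pq j0_def N_def ix_def by (auto split: if_splits)
  define \<alpha> where "\<alpha> = (\<lambda>r. sw 3 b3 (sw 2 b2 (sw 1 b1 r)))"
  define \<beta> where "\<beta> = (\<lambda>c. sw 1 (j0+1) (sw 0 j0 c))"
  have alb: "bij_betw \<alpha> {..<N} {..<N}"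
  proof -
    have "bij_betw (sw 3 b3 \<circ> sw 2 b2 \<circ> sw 1 b1) {..<N} {..<N}"
    proof -
      have s1: "bij_betw (sw 1 b1) {..<N} {..<N}" using ord by (intro sw_bij) auto
      have s2: "bij_betw (sw 2 b2) {..<N} {..<N}" using ord by (intro sw_bij) auto
      have s3: "bij_betw (sw 3 b3) {..<N} {..<N}" using ord by (intro sw_bij) auto
      show ?thesis using bij_betw_trans[OF bij_betw_trans[OF s1 s2] s3] by (simp add: comp_assoc)
    qed
    then show ?thesis unfolding \<alpha>_def comp_def .
  qed
  have beb: "bij_betw \<beta> {..<N} {..<N}"
  proof -
    have "bij_betw (sw 1 (j0+1) \<circ> sw 0 j0) {..<N} {..<N}"
    proof -
      have s1: "bij_betw (sw 0 j0) {..<N} {..<N}" using j0N by (intro sw_bij) auto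
      have s2: "bij_betw (sw 1 (j0+1)) {..<N} {..<N}" using j0N by (intro sw_bij) auto
      show ?thesis using bij_betw_trans[OF s1 s2] by simp
    qed
    then show ?thesis unfolding \<beta>_def comp_def .
  qed
  define g where "g = mat N N (\<lambda>(r,c). Wm (\<alpha> r) (\<beta> c))"
  have N4: "4 \<le> N" using ord by linarith
  have gU: "g \<in> unitary_group N"
    unfolding g_def by (rule perm_unitary[OF Wm_rows[OF N4] alb beb])
  have be_ix: "\<beta> (j0 + ix s) = ix s" for s
    unfolding \<beta>_def j0_def ix_def sw_def by auto
  have gcol: "g $$ (r, j0 + ix s) = (if \<alpha> r < 4 then U4 (\<alpha> r) (ix s) else 0)" if "r < N" for r s
    using that j0N be_ix[of s] unfolding g_def by (auto simp: Wm_def ix_def)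
  have al4: "\<alpha> 0 = 0" "\<alpha> b1 = 1" "\<alpha> b2 = 2" "\<alpha> b3 = 3"
    using ord unfolding \<alpha>_def sw_def by auto
  have al_bs: "\<alpha> (bs ns i) = i" if "i < 4" for i
  proof -
    have "i = 0 \<or> i = 1 \<or> i = 2 \<or> i = 3" using that by auto
    then show ?thesis
    proof (elim disjE)
      assume "i = 0" then show ?thesis using al4 b0 by simp
    next
      assume "i = 1" then show ?thesis using al4 unfolding b1_def by simp
    next
      assume "i = 2" then show ?thesis using al4 unfolding b2_def by simp
    next
      assume "i = 3" then show ?thesis using al4 unfolding b3_def by simp
    qed
  qed
  have al_inv: "\<exists>i<4. r = bs ns i" if "\<alpha> r < 4" for r
  proof -
    have "r = 0 \<or> r = b1 \<or> r = b2 \<or> r = b3"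
      using that ord unfolding \<alpha>_def sw_def by (auto split: if_splits)
    then show ?thesis
    proof (elim disjE)
      assume "r = 0" then show ?thesis using b0 by (intro exI[of _ 0]) simp
    next
      assume "r = b1" then show ?thesis unfolding b1_def by (intro exI[of _ 1]) simp
    next
      assume "r = b2" then show ?thesis unfolding b2_def by (intro exI[of _ 2]) simp
    next
      assume "r = b3" then show ?thesis unfolding b3_def by (intro exI[of _ 3]) simp
    qed
  qed
  define Bk where "Bk = (\<lambda>m. {bs ns m ..< bs ns (Suc m)})"
  have BkN: "Bk m \<subseteq> {..<N}" if "m < length ns" for m
    using bsN[of "Suc m"] that unfolding Bk_def by auto
  have Gg: "GMf j0 g (Bk m) = (\<lambda>s t. cnj (U4 m (ix s)) * U4 m (ix t))" if m: "m < 3" for m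
  proof (intro ext)
    fix s t
    have mk: "m < length ns" using m assms(6) by simp
    let ?F = "\<lambda>r. if \<alpha> r < 4 then cnj (U4 (\<alpha> r) (ix s)) * U4 (\<alpha> r) (ix t) else 0"
    have "GMf j0 g (Bk m) s t = (\<Sum>r\<in>Bk m. ?F r)"
      unfolding GMf_def using BkN[OF mk] gcol by (intro sum.cong refl) auto
    also have "\<dots> = (\<Sum>r\<in>Bk m. if r = bs ns m then ?F (bs ns m) else 0)"
    proof (intro sum.cong refl)
      fix r assume r: "r \<in> Bk m"
      show "?F r = (if r = bs ns m then ?F (bs ns m) else 0)"
      proof (cases "\<alpha> r < 4")
        case True
        then obtain i where i: "i < 4" "r = bs ns i" using al_inv by blast
        have "i < length ns" using i assms(6) by simp
        then have "bs ns i \<le> r" "r < bs ns (Suc i)" using i bsS by auto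
        moreover have "bs ns m \<le> r" "r < bs ns (Suc m)" using r unfolding Bk_def by auto
        ultimately have "i = m" using block_unique by blast
        then show ?thesis using i by simp
      next
        case False
        then show ?thesis using m al_bs[of m] by auto
      qed
    qed
    also have "\<dots> = ?F (bs ns m)"
      using bsS[OF mk] unfolding Bk_def by simp
    also have "\<dots> = cnj (U4 m (ix s)) * U4 m (ix t)" using al_bs[of m] m by simp
    finally show "GMf j0 g (Bk m) s t = cnj (U4 m (ix s)) * U4 m (ix t)" .
  qed
  have notin: "g \<notin> triple_prod (block_unitary_group ns) (orthogonal_group N) (block_unitary_group [p, q])"
  proof
    assume "g \<in> triple_prod (block_unitary_group ns) (orthogonal_group N) (block_unitary_group [p, q])"
    then obtain l ob h where g': "g = l * ob * h" and lL: "l \<in> block_unitary_group ns"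
      and oO: "ob \<in> orthogonal_group N" and hH: "h \<in> block_unitary_group [p,q]"
      unfolding triple_prod_def by blast
    have lc: "l \<in> carrier_mat N N" using lL sumN unfolding block_unitary_group_def unitary_group_def by auto
    have oU: "ob \<in> unitary_group N" using oO unfolding orthogonal_group_def by auto
    have oc: "ob \<in> carrier_mat N N" using oU unfolding unitary_group_def by auto
    have oR: "cnj (ob $$ (i,j)) = ob $$ (i,j)" if "i < N" "j < N" for i j
      using oO that unfolding orthogonal_group_def by (auto simp: Reals_cnj_iff)
    have hc: "h \<in> carrier_mat N N" using hH N_def unfolding block_unitary_group_def unitary_group_def by auto
    define Y where "Y = ob * h"
    have Yc: "Y \<in> carrier_mat N N" using oc hc unfolding Y_def by simp
    have gY: "g = l * Y" using g' lc oc hc unfolding Y_def by simp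
    define A where "A = Af j0 h"
    have ixN: "j0 + ix s < N" for s using j0N by (simp add: ix_def)
    have ix_eq: "(j0 + ix s = j0 + ix t) = (s = t)" for s t by (simp add: ix_def)
    have GL: "GMf j0 g B = GMf j0 Y B"
      if B: "B \<subseteq> {..<N}" and cl: "\<And>r t. r \<in> B \<Longrightarrow> t < N \<Longrightarrow> same_block ns r t \<Longrightarrow> t \<in> B" for B
      unfolding GMf_def gY
      by (intro ext) (rule gram_left[OF lL Yc sumN B cl ixN ixN])
    have GR: "GMf j0 Y B = m2 (m2 (adj2 A) (GMf j0 ob B)) A" if B: "B \<subseteq> {..<N}" for B
      unfolding Y_def A_def using gram_right[OF hH, of ob j0 B] oc j0N Jcl B unfolding N_def by blast
    have Gsym: "GMf j0 ob B s t = GMf j0 ob B t s" if B: "B \<subseteq> {..<N}" for B s t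
      unfolding GMf_def using B oR ixN by (intro sum.cong refl) (auto simp: mult.commute)
    have Go_all: "GMf j0 ob {..<N} = id2"
      unfolding GMf_def id2_def using unitary_cols[OF oU ixN ixN] ix_eq by (auto simp: fun_eq_iff)
    have Gg_all: "GMf j0 g {..<N} = id2"
      unfolding GMf_def id2_def using unitary_cols[OF gU ixN ixN] ix_eq by (auto simp: fun_eq_iff)
    have "id2 = m2 (m2 (adj2 A) id2) A"
      using Gg_all GL[of "{..<N}"] GR[of "{..<N}"] Go_all by simp
    then have "m2 (adj2 A) A = id2" by (simp add: m2_id2)
    then have AA: "m2 A (adj2 A) = id2" by (rule inv2)
    have clB: "t \<in> Bk m" if mk: "m < length ns" and rB: "r \<in> Bk m" and tN: "t < N" and sb: "same_block ns r t" for m r t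
    proof -
      obtain m' where "m' < length ns" "bs ns m' \<le> r" "r < bs ns (Suc m')" "bs ns m' \<le> t" "t < bs ns (Suc m')"
        using sb unfolding same_block_alt by blast
      moreover have "bs ns m \<le> r" "r < bs ns (Suc m)" using rB unfolding Bk_def by auto
      ultimately have "m' = m" using block_unique by blast
      then show ?thesis using \<open>bs ns m' \<le> t\<close> \<open>t < bs ns (Suc m')\<close> unfolding Bk_def by auto
    qed
    have GB: "GMf j0 g (Bk m) = m2 (m2 (adj2 A) (GMf j0 ob (Bk m))) A" if "m < 3" for m
    proof -
      have mk: "m < length ns" using that assms(6) by simp
      show ?thesis using GL[OF BkN[OF mk] clB[OF mk]] GR[OF BkN[OF mk]] by simp
    qed
    have symB: "\<And>s t. GMf j0 ob (Bk m) s t = GMf j0 ob (Bk m) t s" if "m < 3" for m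
      using Gsym BkN that assms(6) by simp
    have GB0: "GMf j0 g (Bk 0) = m2 (m2 (adj2 A) (GMf j0 ob (Bk 0))) A" by (rule GB) simp
    have GB1: "GMf j0 g (Bk 1) = m2 (m2 (adj2 A) (GMf j0 ob (Bk 1))) A" by (rule GB) simp
    have GB2: "GMf j0 g (Bk 2) = m2 (m2 (adj2 A) (GMf j0 ob (Bk 2))) A" by (rule GB) simp
    have "tr2 (m2 (m2 (GMf j0 g (Bk 0)) (GMf j0 g (Bk 1))) (GMf j0 g (Bk 2)))
        = tr2 (m2 (m2 (GMf j0 g (Bk 0)) (GMf j0 g (Bk 2))) (GMf j0 g (Bk 1)))"
      unfolding GB0 GB1 GB2
      by (rule key2[OF AA symB symB symB]) simp_all
    moreover have Gg0: "GMf j0 g (Bk 0) = (\<lambda>s t. cnj (U4 0 (ix s)) * U4 0 (ix t))" by (rule Gg) simp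
    moreover have Gg1: "GMf j0 g (Bk 1) = (\<lambda>s t. cnj (U4 1 (ix s)) * U4 1 (ix t))" by (rule Gg) simp
    moreover have Gg2: "GMf j0 g (Bk 2) = (\<lambda>s t. cnj (U4 2 (ix s)) * U4 2 (ix t))" by (rule Gg) simp
    ultimately show False using num_neq
      by simp
  qed
  show ?thesis using sub gU notin unfolding N_def by blast
qed

end
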